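(* Let $P,Q\in\mathbb{H}[q_1,q_2]$ and $a,b\in\mathbb{H}$. (1) If $P=(q_1-a)*P_1$ and $Q=(q_1-a)*Q_1$ for some $P_1,Q_1\in\mathbb{H}[q_1,q_2]$, then ${\rm Res}(P,Q;q_1)\equiv0$. (2) If $P=(q_2-b)*P_2$ and $Q=(q_2-b)*Q_2$ for some $P_2,Q_2\in\mathbb{H}[q_1,q_2]$, then ${\rm Res}(P,Q;q_2)\equiv0$.
   Context: $\mathbb{H}$ denotes the quaternions. A slice regular polynomial in two quaternionic variables is a function $\mathbb{H}^2\to\mathbb{H}$ of the form $P(q_1,q_2)=\sum_{n=0}^{N}\sum_{m=0}^{M}q_1^nq_2^ma_{n,m}$ with $a_{n,m}\in\mathbb{H}$ (coefficients on the right); $\deg_{q_1}P$, $\deg_{q_2}P$ are the degrees in $q_1$, $q_2$. The set of these is $\mathbb{H}[q_1,q_2]$, and $\mathbb{H}[q]$ denotes the analogous one-variable polynomials $\sum q^na_n$. The $*$-product is defined by $\big(\sum q_1^nq_2^ma_{n,m}\big)*\big(\sum q_1^nq_2^mb_{n,m}\big)=\sum_{n,m}q_1^nq_2^m\sum_{r\le n,s\le m}a_{r,s}b_{n-r,m-s}$ (and analogously in one variable); $(\mathbb{H}[q],+,* )$ is a left and right Ore domain and we let $\mathcal{L}$ be its skew field of quotients. Every $P\in\mathbb{H}[q_1,q_2]$ can be written as $P=\sum_{k=0}^{n}q_1^kP_k(q_2)$ with $P_k\in\mathbb{H}[q_2]$, and as $P=\sum_{k=0}^{r}q_2^k*\tilde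 P_k(q_1)$ with $\tilde P_k\in\mathbb{H}[q_1]$. Dieudonné determinant: for a skew field $(\mathbb F,+,\star)$, let $\overline{\mathbb F}^\star$ be the abelianization of its multiplicative group; ${\rm Det}^\star_N$ is the unique homomorphism $GL(N,\mathbb F)\to\overline{\mathbb F}^\star$ sending ${\rm diag}(\lambda_1,\dots,\lambda_N)$ to the class of $\lambda_1\star\cdots\star\lambda_N$, extended by the value $[0]$ on non-invertible matrices. Here ${\rm Det}^*_N$ is this determinant over $\mathcal L$; for a matrix with entries in $\mathbb{H}[q]$ its value has a slice regular polynomial representative, unique up to commutators, with which it is identified. Regular resultants: let $P=\sum_{k=0}^nq_1^kP_k(q_2)$, $Q=\sum_{k=0}^mq_1^kQ_k(q_2)$. The Sylvester matrix $A(q_2)$ is the $(n+m)\times(n+m)$ matrix whose $j$-th column ($1\le j\le m$) has entries $P_0,\dots,P_n$ in rows $j,\dots,j+n$ and zeros elsewhere, and whose $(m+j)$-th column ($1\le j\le n$) has entries $Q_0,\dots,Q_m$ in rows $j,\dots,j+m$ and zeros elsewhere; ${\rm Res}(P,Q;q_1):={\rm Det}^*_{n+m}(A(q_2))$. Likewise, with $P=\sum_{k=0}^rq_2^k*\tilde P_k(q_1)$, $Q=\sum_{k=0}^sq_2^k*\tilde Q_k(q_1)$, $B(q_1)$ is the $(r+s)\times(r+s)$ matrix built in the same way from $\tilde P_0,\dots,\tilde P_r$ (first $s$ columns) and $\tilde Q_0,\dots,\tilde Q_s$ (last $r$ columns), and ${\rm Res}(P,Q;q_2):={\rm Det}^*_{r+s}(B(q_1))$.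 "${\rm Res}\equiv0$" means it is the zero polynomial (zero class). *)

theory Defs
  imports Complex_Main
begin

datatype quat = Quat (re: real) (im1: real) (im2: real) (im3: real)

instantiation quat :: ring_1
begin
definition "0 = Quat 0 0 0 0"
definition "1 = Quat 1 0 0 0"
definition "x + y = Quat (re x + re y) (im1 x + im1 y) (im2 x + im2 y) (im3 x + im3 y)"
definition "- x = Quat (- re x) (- im1 x) (- im2 x) (- im3 x)"
definition "x - y = Quat (re x - re y) (im1 x - im1 y) (im2 x - im2 y) (im3 x - im3 y)"
definition "x * y = Quat
   (re x * re y - im1 x * im1 y - im2 x * im2 y - im3 x * im3 y)
   (re x * im1 y + im1 x * re y + im2 x * im3 y - im3 x * im2 y)
   (re x * im2 y - im1 x * im3 y + im2 x * re y + im3 x * im1 y)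
   (re x * im3 y + im1 x * im2 y - im2 x * im1 y + im3 x * re y)"
instance
  by standard (simp_all add: zero_quat_def one_quat_def plus_quat_def uminus_quat_def
      minus_quat_def times_quat_def algebra_simps quat.expand)
end

text \<open>One variable: coefficient function n |-> a_n of sum q^n a_n, finitely supported.\<close>
type_synonym qpoly = "nat \<Rightarrow> quat"

definition qpoly1 :: "qpoly \<Rightarrow> bool" where
  "qpoly1 p \<longleftrightarrow> finite {n. p n \<noteq> 0}"

definition one1 :: qpoly where "one1 = (\<lambda>n. if n = 0 then 1 else 0)"

definition star1 :: "qpoly \<Rightarrow> qpoly \<Rightarrow> qpoly" where
  "star1 p r = (\<lambda>n. \<Sum>k\<le>n. p k * r (n - k))"

text \<open>Two variables: (n,m) |-> a_{n,m} of sum q1^n q2^m a_{n,m}, finitely supported.\<close>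
type_synonym qpoly2 = "nat \<Rightarrow> nat \<Rightarrow> quat"

definition qpoly2 :: "qpoly2 \<Rightarrow> bool" where
  "qpoly2 P \<longleftrightarrow> finite {(n, m). P n m \<noteq> 0}"

definition star2 :: "qpoly2 \<Rightarrow> qpoly2 \<Rightarrow> qpoly2" where
  "star2 P R = (\<lambda>n m. \<Sum>r\<le>n. \<Sum>s\<le>m. P r s * R (n - r) (m - s))"

definition q1_minus :: "quat \<Rightarrow> qpoly2" where
  "q1_minus a = (\<lambda>n m. if n = 0 \<and> m = 0 then - a else if n = 1 \<and> m = 0 then 1 else 0)"

definition q2_minus :: "quat \<Rightarrow> qpoly2" where
  "q2_minus b = (\<lambda>n m. if n = 0 \<and> m = 0 then - b else if n = 0 \<and> m = 1 then 1 else 0)"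

definition deg_q1 :: "qpoly2 \<Rightarrow> nat" where
  "deg_q1 P = Max (insert 0 {n. \<exists>m. P n m \<noteq> 0})"

definition deg_q2 :: "qpoly2 \<Rightarrow> nat" where
  "deg_q2 P = Max (insert 0 {m. \<exists>n. P n m \<noteq> 0})"

text \<open>P = sum_k q1^k P_k(q2):  P_k(q2) = sum_m q2^m a_{k,m}.\<close>
definition coeff_q1 :: "qpoly2 \<Rightarrow> nat \<Rightarrow> qpoly" where
  "coeff_q1 P k = (\<lambda>m. P k m)"

text \<open>P = sum_k q2^k * P~_k(q1):  P~_k(q1) = sum_n q1^n a_{n,k}.\<close>
definition coeff_q2 :: "qpoly2 \<Rightarrow> nat \<Rightarrow> qpoly" where
  "coeff_q2 P k = (\<lambda>n. P n k)"

section \<open>Sylvester matrix (0-indexed, size n+m)\<close>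

definition sylvester :: "nat \<Rightarrow> nat \<Rightarrow> (nat \<Rightarrow> qpoly) \<Rightarrow> (nat \<Rightarrow> qpoly) \<Rightarrow> nat \<Rightarrow> nat \<Rightarrow> qpoly" where
  "sylvester n m Pc Qc = (\<lambda>i j.
     if j < m then (if j \<le> i \<and> i - j \<le> n then Pc (i - j) else (\<lambda>_. 0))
     else (if j - m \<le> i \<and> i - (j - m) \<le> m then Qc (i - (j - m)) else (\<lambda>_. 0)))"

text \<open>phi embeds (H[q],+,star) into the division ring 'd as its (right) skew field of quotients.\<close>
definition quotient_skew_field :: "(qpoly \<Rightarrow> 'd::division_ring) \<Rightarrow> bool" where
  "quotient_skew_field \<phi> \<longleftrightarrow>
     \<phi> one1 = 1 \<and>
     (\<forall>p r. qpoly1 p \<longrightarrow> qpoly1 r \<longrightarrow> \<phi> (\<lambda>n. p n + r n) = \<phi> p + \<phi> r) \<and>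
     (\<forall>p r. qpoly1 p \<longrightarrow> qpoly1 r \<longrightarrow> \<phi> (star1 p r) = \<phi> p * \<phi> r) \<and>
     inj_on \<phi> {p. qpoly1 p} \<and>
     (\<forall>x. \<exists>a b. qpoly1 a \<and> qpoly1 b \<and> b \<noteq> (\<lambda>_. 0) \<and> x = \<phi> a * inverse (\<phi> b))"

definition invertible_mat :: "nat \<Rightarrow> (nat \<Rightarrow> nat \<Rightarrow> 'd::division_ring) \<Rightarrow> bool" where
  "invertible_mat N A \<longleftrightarrow> (\<exists>B. \<forall>i<N. \<forall>j<N.
      (\<Sum>k<N. A i k * B k j) = (if i = j then 1 else 0) \<and>
      (\<Sum>k<N. B i k * A k j) = (if i = j then 1 else 0))"

text \<open>Det*_N(A) = [0] iff A is not invertible over the skew field of quotients L.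
  The type 'd ranges over division rings; any 'd carrying an embedding phi as above
  is (a copy of) L.\<close>
definition dieudonne_det_zero :: "'d::division_ring itself \<Rightarrow> nat \<Rightarrow> (nat \<Rightarrow> nat \<Rightarrow> qpoly) \<Rightarrow> bool" where
  "dieudonne_det_zero _ N A \<longleftrightarrow>
     (\<forall>\<phi> :: qpoly \<Rightarrow> 'd. quotient_skew_field \<phi> \<longrightarrow> \<not> invertible_mat N (\<lambda>i j. \<phi> (A i j)))"

text \<open>Res(P,Q;q1) == 0 and Res(P,Q;q2) == 0 (convention: resultant with the zero polynomial is 0).\<close>
definition res_q1_zero :: "'d::division_ring itself \<Rightarrow> qpoly2 \<Rightarrow> qpoly2 \<Rightarrow> bool" where
  "res_q1_zero T P Q \<longleftrightarrow> P = (\<lambda>_ _. 0) \<or> Q = (\<lambda>_ _. 0) \<or>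
     dieudonne_det_zero T (deg_q1 P + deg_q1 Q)
       (sylvester (deg_q1 P) (deg_q1 Q) (coeff_q1 P) (coeff_q1 Q))"

definition res_q2_zero :: "'d::division_ring itself \<Rightarrow> qpoly2 \<Rightarrow> qpoly2 \<Rightarrow> bool" where
  "res_q2_zero T P Q \<longleftrightarrow> P = (\<lambda>_ _. 0) \<or> Q = (\<lambda>_ _. 0) \<or>
     dieudonne_det_zero T (deg_q2 P + deg_q2 Q)
       (sylvester (deg_q2 P) (deg_q2 Q) (coeff_q2 P) (coeff_q2 Q))"

end

theory Submission
  imports Defs
begin

lemma star_q1:
  "star2 (q1_minus a) R n m = (if n = 0 then 0 else R (n - 1) m) - a * R n m"
proof -
  have inner: "(\<Sum>s\<le>m. q1_minus a r s * R (n - r) (m - s)) =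
      (if r = 0 then - a * R n m else if r = 1 then R (n - 1) m else 0)" for r
  proof -
    have "(\<Sum>s\<le>m. q1_minus a r s * R (n - r) (m - s)) =
        (\<Sum>s\<le>m. if s = 0 then (if r = 0 then - a else if r = 1 then 1 else 0) * R (n - r) (m - s) else 0)"
      by (rule sum.cong) (auto simp: q1_minus_def)
    also have "\<dots> = (if r = 0 then - a else if r = 1 then 1 else 0) * R (n - r) m"
      by (simp add: sum.delta)
    finally show ?thesis by auto
  qed
  have E: "star2 (q1_minus a) R n m = (\<Sum>r\<le>n. (if r = 0 then - a * R n m else if r = 1 then R (n - 1) m else 0))"
    by (simp add: star2_def inner)
  show ?thesis
  proof (cases n)
    case 0
    then show ?thesis using E by simp
  next
    case (Suc k)
    have "star2 (q1_minus a) R n m = (\<Sum>r\<le>Suc k. (if r = 0 then - a * R n m else if r = 1 then R (n - 1) m else 0))"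
      using E Suc by simp
    also have "\<dots> = - a * R n m + (\<Sum>r\<le>k. (if Suc r = 1 then R (n - 1) m else 0))"
      by (subst sum.atMost_Suc_shift) simp
    also have "\<dots> = - a * R n m + R (n - 1) m"
      by (simp add: sum.delta)
    finally show ?thesis using Suc by (simp add: algebra_simps)
  qed
qed

lemma tele:
  assumes "P = star2 (q1_minus a) R"
  shows "(\<Sum>k\<le>L. a ^ k * P k t) = - (a ^ Suc L * R L t)"
proof (induction L)
  case 0
  then show ?case by (simp add: assms star_q1)
next
  case (Suc L)
  have "(\<Sum>k\<le>Suc L. a ^ k * P k t) = - (a ^ Suc L * R L t) + a ^ Suc L * (R L t - a * R (Suc L) t)"
    using Suc by (simp add: assms star_q1)
  also have "\<dots> = - (a ^ Suc L * (a * R (Suc L) t))"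
    by (simp add: algebra_simps)
  also have "\<dots> = - (a ^ Suc (Suc L) * R (Suc L) t)"
    by (simp only: power_Suc2[of a "Suc L"] mult.assoc)
  finally show ?case .
qed

lemma supp_bound:
  assumes "qpoly2 R"
  shows "\<exists>B. \<forall>n m. R n m \<noteq> 0 \<longrightarrow> n < B"
proof -
  have "finite (fst ` {(n, m). R n m \<noteq> 0})" using assms unfolding qpoly2_def by blast
  then obtain B where "\<forall>x\<in>fst ` {(n, m). R n m \<noteq> 0}. x < B"
    using finite_nat_set_iff_bounded by blast
  then show ?thesis
  proof (intro exI allI impI)
    fix n m assume "R n m \<noteq> 0"
    then have "n \<in> fst ` {(n, m). R n m \<noteq> 0}" by (intro image_eqI[where x="(n,m)"]) auto
    then show "n < B" using \<open>\<forall>x\<in>fst ` {(n, m). R n m \<noteq> 0}. x < B\<close> by blast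
  qed
qed

lemma deg_bound:
  assumes "qpoly2 P" "deg_q1 P < k"
  shows "P k t = 0"
proof (rule ccontr)
  assume h: "P k t \<noteq> 0"
  have "{n. \<exists>m. P n m \<noteq> 0} = fst ` {(n, m). P n m \<noteq> 0}" by force
  then have "finite {n. \<exists>m. P n m \<noteq> 0}" using assms(1) unfolding qpoly2_def by simp
  then have "k \<le> deg_q1 P" unfolding deg_q1_def using h by (intro Max_ge) auto
  then show False using assms(2) by simp
qed

lemma eval0:
  assumes "qpoly2 P" "qpoly2 R" "P = star2 (q1_minus a) R" "deg_q1 P \<le> L"
  shows "(\<Sum>k\<le>L. a ^ k * P k t) = 0"
proof -
  obtain B where B: "\<forall>n m. R n m \<noteq> 0 \<longrightarrow> n < B" using supp_bound[OF assms(2)] by blast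
  define L' where "L' = max L B"
  have "(\<Sum>k\<le>L. a ^ k * P k t) = (\<Sum>k\<le>L'. a ^ k * P k t)"
    by (rule sum.mono_neutral_left) (use deg_bound[OF assms(1)] assms(4) in \<open>auto simp: L'_def\<close>)
  also have "\<dots> = - (a ^ Suc L' * R L' t)" by (rule tele[OF assms(3)])
  also have "R L' t = 0" using B L'_def by force
  finally show ?thesis by simp
qed

lemma deg_pos:
  assumes "qpoly2 P" "qpoly2 R" "P = star2 (q1_minus a) R" "P \<noteq> (\<lambda>_ _. 0)"
  shows "1 \<le> deg_q1 P"
proof (rule ccontr)
  assume "\<not> 1 \<le> deg_q1 P"
  then have d: "deg_q1 P = 0" by simp
  have "P k t = 0" for k t
  proof (cases k)
    case 0
    then show ?thesis using eval0[OF assms(1-3), of 0 t] d by simp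
  next
    case (Suc k')
    then show ?thesis using deg_bound[OF assms(1)] d by simp
  qed
  then have "P = (\<lambda>_ _. 0)" by (intro ext)
  then show False using assms(4) by auto
qed

lemma colsum:
  assumes "qpoly2 P" "qpoly2 R" "P = star2 (q1_minus a) R" "j + deg_q1 P < N"
  shows "(\<Sum>i<N. a ^ i * (if j \<le> i \<and> i - j \<le> deg_q1 P then P (i - j) t else 0)) = 0"
proof -
  have "(\<Sum>i<N. a ^ i * (if j \<le> i \<and> i - j \<le> deg_q1 P then P (i - j) t else 0))
      = (\<Sum>i<N. if i \<in> {i. j \<le> i} then a ^ i * P (i - j) t else 0)"
    by (rule sum.cong) (auto simp: deg_bound[OF assms(1)] not_le)
  also have "\<dots> = (\<Sum>i\<in>{..<N} \<inter> {i. j \<le> i}. a ^ i * P (i - j) t)"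
    by (rule sum.inter_restrict[symmetric]) simp
  also have "{..<N} \<inter> {i. j \<le> i} = {0 + j..<(N - j) + j}" using assms(4) by auto
  also have "(\<Sum>i\<in>{0 + j..<(N - j) + j}. a ^ i * P (i - j) t) = (\<Sum>k\<in>{0..<N - j}. a ^ (k + j) * P k t)"
    by (subst sum.shift_bounds_nat_ivl) simp
  also have "\<dots> = a ^ j * (\<Sum>k\<le>N - j - 1. a ^ k * P k t)"
  proof -
    have "{0..<N - j} = {..N - j - 1}" using assms(4) by auto
    moreover have "a ^ (k + j) * P k t = a ^ j * (a ^ k * P k t)" for k
      by (simp add: power_add[symmetric] mult.assoc[symmetric] add.commute)
    ultimately show ?thesis by (simp add: sum_distrib_left)
  qed
  also have "(\<Sum>k\<le>N - j - 1. a ^ k * P k t) = 0"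
    using eval0[OF assms(1-3)] assms(4) by simp
  finally show ?thesis by simp
qed

lemma qsf_zero:
  assumes "quotient_skew_field \<phi>"
  shows "\<phi> (\<lambda>_. 0) = 0"
proof -
  have q: "qpoly1 (\<lambda>_. 0)" by (simp add: qpoly1_def)
  have "\<phi> (\<lambda>n. (\<lambda>_. 0::quat) n + (\<lambda>_. 0) n) = \<phi> (\<lambda>_. 0) + \<phi> (\<lambda>_. 0)"
    using assms q unfolding quotient_skew_field_def by blast
  then show ?thesis by simp
qed

lemma qpoly1_sum:
  assumes "finite I" "\<forall>i\<in>I. qpoly1 (f i)"
  shows "qpoly1 (\<lambda>t. \<Sum>i\<in>I. f i t)"
proof -
  have "{t. (\<Sum>i\<in>I. f i t) \<noteq> 0} \<subseteq> (\<Union>i\<in>I. {t. f i t \<noteq> 0})"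
    by (auto intro: ccontr simp: sum.neutral)
  moreover have "finite (\<Union>i\<in>I. {t. f i t \<noteq> 0})" using assms unfolding qpoly1_def by blast
  ultimately show ?thesis unfolding qpoly1_def by (rule finite_subset)
qed

lemma qsf_sum:
  assumes "quotient_skew_field \<phi>" "finite I" "\<forall>i\<in>I. qpoly1 (f i)"
  shows "\<phi> (\<lambda>t. \<Sum>i\<in>I. f i t) = (\<Sum>i\<in>I. \<phi> (f i))"
  using assms(2,3)
proof (induction I rule: finite_induct)
  case empty
  then show ?case using qsf_zero[OF assms(1)] by simp
next
  case (insert x F)
  have "\<phi> (\<lambda>t. \<Sum>i\<in>insert x F. f i t) = \<phi> (\<lambda>t. f x t + (\<lambda>t. \<Sum>i\<in>F. f i t) t)"
    using insert by simp
  also have "\<dots> = \<phi> (f x) + \<phi> (\<lambda>t. \<Sum>i\<in>F. f i t)"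
    using assms(1) insert qpoly1_sum[of F f] unfolding quotient_skew_field_def by blast
  finally show ?case using insert by simp
qed

lemma qpoly1_coeff: "qpoly2 P \<Longrightarrow> qpoly1 (coeff_q1 P k)"
proof -
  assume "qpoly2 P"
  then have "finite (snd ` {(n, m). P n m \<noteq> 0})" unfolding qpoly2_def by blast
  moreover have "{m. coeff_q1 P k m \<noteq> 0} \<subseteq> snd ` {(n, m). P n m \<noteq> 0}"
    by (force simp: coeff_q1_def)
  ultimately show ?thesis unfolding qpoly1_def by (rule finite_subset[rotated])
qed

lemma qpoly1_scale: "qpoly1 p \<Longrightarrow> qpoly1 (\<lambda>t. c * p t)"
  unfolding qpoly1_def by (rule finite_subset[rotated]) auto

lemma part1:
  assumes "qpoly2 P" "qpoly2 Q" "qpoly2 P1" "qpoly2 Q1"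
    "P = star2 (q1_minus a) P1" "Q = star2 (q1_minus a) Q1"
  shows "res_q1_zero TYPE('d::division_ring) P Q"
proof (cases "P = (\<lambda>_ _. 0) \<or> Q = (\<lambda>_ _. 0)")
  case True
  then show ?thesis unfolding res_q1_zero_def by blast
next
  case False
  define n where "n = deg_q1 P"
  define m where "m = deg_q1 Q"
  define N where "N = n + m"
  define A where "A = sylvester n m (coeff_q1 P) (coeff_q1 Q)"
  have N1: "1 \<le> N" using deg_pos[OF assms(1,3,5)] False unfolding N_def n_def by auto
  have Aq: "qpoly1 (A i j)" for i j
    unfolding A_def sylvester_def using qpoly1_coeff[OF assms(1)] qpoly1_coeff[OF assms(2)]
    by (auto simp: qpoly1_def)
  have colz: "(\<Sum>i<N. a ^ i * A i j t) = 0" if "j < N" for j t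
  proof (cases "j < m")
    case True
    have ent: "A i j t = (if j \<le> i \<and> i - j \<le> n then P (i - j) t else 0)" for i
      using True by (simp add: A_def sylvester_def coeff_q1_def)
    have z: "(\<Sum>i<N. a ^ i * (if j \<le> i \<and> i - j \<le> n then P (i - j) t else 0)) = 0"
      using colsum[OF assms(1,3,5), of j N t] True unfolding N_def n_def m_def by simp
    show ?thesis unfolding ent using z by (simp add: if_distrib cong: if_cong)
  next
    case False
    have ent: "A i j t = (if j - m \<le> i \<and> i - (j - m) \<le> m then Q (i - (j - m)) t else 0)" for i
      using False by (simp add: A_def sylvester_def coeff_q1_def)
    have z: "(\<Sum>i<N. a ^ i * (if j - m \<le> i \<and> i - (j - m) \<le> m then Q (i - (j - m)) t else 0)) = 0"
      using colsum[OF assms(2,4,6), of "j - m" N t] False that unfolding N_def n_def m_def by simp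
    show ?thesis unfolding ent using z by (simp add: if_distrib cong: if_cong)
  qed
  show ?thesis unfolding res_q1_zero_def dieudonne_det_zero_def
  proof (intro disjI2 allI impI)
    fix \<phi> :: "qpoly \<Rightarrow> 'd"
    assume qsf: "quotient_skew_field \<phi>"
    define c where "c i = (\<lambda>t::nat. if t = 0 then a ^ i else 0)" for i
    define w where "w i = \<phi> (c i)" for i
    have cq: "qpoly1 (c i)" for i unfolding qpoly1_def c_def
      by (rule finite_subset[of _ "{0}"]) auto
    have st: "star1 (c i) p = (\<lambda>t. a ^ i * p t)" for i p
    proof (rule ext)
      fix t
      have "(\<Sum>k\<le>t. c i k * p (t - k)) = (\<Sum>k\<le>t. if k = 0 then a ^ i * p (t - k) else 0)"
        by (rule sum.cong) (auto simp: c_def)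
      then show "star1 (c i) p t = a ^ i * p t" by (simp add: star1_def sum.delta)
    qed
    have w0: "w 0 = 1"
    proof -
      have "c 0 = one1" unfolding c_def one1_def by auto
      then show ?thesis using qsf unfolding w_def quotient_skew_field_def by simp
    qed
    have wz: "(\<Sum>i<N. w i * \<phi> (A i j)) = 0" if "j < N" for j
    proof -
      have "(\<Sum>i<N. w i * \<phi> (A i j)) = (\<Sum>i<N. \<phi> (\<lambda>t. a ^ i * A i j t))"
      proof (rule sum.cong)
        fix i assume "i \<in> {..<N}"
        have "\<phi> (star1 (c i) (A i j)) = \<phi> (c i) * \<phi> (A i j)"
          using qsf cq Aq unfolding quotient_skew_field_def by blast
        then show "w i * \<phi> (A i j) = \<phi> (\<lambda>t. a ^ i * A i j t)" by (simp add: w_def st)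
      qed simp
      also have "\<dots> = \<phi> (\<lambda>t. \<Sum>i<N. a ^ i * A i j t)"
        by (rule qsf_sum[symmetric, OF qsf]) (auto intro: qpoly1_scale Aq)
      also have "\<dots> = 0" using colz[OF that] qsf_zero[OF qsf] by simp
      finally show ?thesis .
    qed
    show "\<not> invertible_mat (deg_q1 P + deg_q1 Q) (\<lambda>i j. \<phi> (sylvester (deg_q1 P) (deg_q1 Q) (coeff_q1 P) (coeff_q1 Q) i j))"
    proof
      assume "invertible_mat (deg_q1 P + deg_q1 Q) (\<lambda>i j. \<phi> (sylvester (deg_q1 P) (deg_q1 Q) (coeff_q1 P) (coeff_q1 Q) i j))"
      then obtain B where B: "\<forall>i<N. \<forall>j<N. (\<Sum>k<N. \<phi> (A i k) * B k j) = (if i = j then 1 else 0)"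
        unfolding invertible_mat_def A_def N_def n_def m_def by blast
      have "(\<Sum>i<N. w i * (\<Sum>k<N. \<phi> (A i k) * B k 0)) = (\<Sum>i<N. w i * (if i = 0 then 1 else 0))"
        using B N1 by (intro sum.cong) auto
      also have "\<dots> = w 0" using N1 by (simp add: if_distrib sum.delta cong: if_cong)
      finally have e1: "(\<Sum>i<N. w i * (\<Sum>k<N. \<phi> (A i k) * B k 0)) = 1" using w0 by simp
      have "(\<Sum>i<N. w i * (\<Sum>k<N. \<phi> (A i k) * B k 0)) = (\<Sum>k<N. (\<Sum>i<N. w i * \<phi> (A i k)) * B k 0)"
      proof -
        have "(\<Sum>i<N. w i * (\<Sum>k<N. \<phi> (A i k) * B k 0)) = (\<Sum>i<N. \<Sum>k<N. w i * \<phi> (A i k) * B k 0)"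
          by (simp add: sum_distrib_left mult.assoc)
        also have "\<dots> = (\<Sum>k<N. \<Sum>i<N. w i * \<phi> (A i k) * B k 0)"
          by (rule sum.swap)
        also have "\<dots> = (\<Sum>k<N. (\<Sum>i<N. w i * \<phi> (A i k)) * B k 0)"
          by (simp add: sum_distrib_right)
        finally show ?thesis .
      qed
      also have "\<dots> = 0" using wz by simp
      finally show False using e1 by simp
    qed
  qed
qed

definition tr :: "qpoly2 \<Rightarrow> qpoly2" where "tr P = (\<lambda>n m. P m n)"

lemma tr_tr[simp]: "tr (tr P) = P" by (simp add: tr_def)

lemma qpoly2_tr: "qpoly2 P \<Longrightarrow> qpoly2 (tr P)"
proof -
  assume "qpoly2 P"
  then have "finite (prod.swap ` {(n, m). P n m \<noteq> 0})" unfolding qpoly2_def by blast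
  moreover have "{(n, m). tr P n m \<noteq> 0} = prod.swap ` {(n, m). P n m \<noteq> 0}"
    by (force simp: tr_def)
  ultimately show ?thesis unfolding qpoly2_def by simp
qed

lemma star2_tr: "star2 (tr A) (tr B) = tr (star2 A B)"
  unfolding star2_def tr_def by (intro ext) (rule sum.swap)

lemma q2_tr: "q2_minus b = tr (q1_minus b)"
  unfolding q2_minus_def q1_minus_def tr_def by (intro ext) auto

lemma res_tr: "res_q2_zero T P Q = res_q1_zero T (tr P) (tr Q)"
proof -
  have d: "deg_q2 X = deg_q1 (tr X)" for X unfolding deg_q2_def deg_q1_def tr_def by simp
  have c: "coeff_q2 X = coeff_q1 (tr X)" for X unfolding coeff_q2_def coeff_q1_def tr_def by simp
  have z: "(X = (\<lambda>_ _. 0)) = (tr X = (\<lambda>_ _. 0))" for X unfolding tr_def by (metis)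
  show ?thesis unfolding res_q2_zero_def res_q1_zero_def d c z[of P] z[of Q] ..
qed

theorem proposition4p7:
  fixes P Q :: qpoly2 and a b :: quat
  assumes "qpoly2 P" and "qpoly2 Q"
  shows "(\<forall>P1 Q1. qpoly2 P1 \<and> qpoly2 Q1 \<and> P = star2 (q1_minus a) P1 \<and> Q = star2 (q1_minus a) Q1
            \<longrightarrow> res_q1_zero TYPE('d::division_ring) P Q)
       \<and> (\<forall>P2 Q2. qpoly2 P2 \<and> qpoly2 Q2 \<and> P = star2 (q2_minus b) P2 \<and> Q = star2 (q2_minus b) Q2
            \<longrightarrow> res_q2_zero TYPE('d::division_ring) P Q)"
proof (intro conjI allI impI)
  fix P1 Q1 assume "qpoly2 P1 \<and> qpoly2 Q1 \<and> P = star2 (q1_minus a) P1 \<and> Q = star2 (q1_minus a) Q1"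
  then show "res_q1_zero TYPE('d::division_ring) P Q" using part1 assms by blast
next
  fix P2 Q2 assume h: "qpoly2 P2 \<and> qpoly2 Q2 \<and> P = star2 (q2_minus b) P2 \<and> Q = star2 (q2_minus b) Q2"
  have "tr P = star2 (q1_minus b) (tr P2)" "tr Q = star2 (q1_minus b) (tr Q2)"
    using h star2_tr[of "q1_minus b"] by (simp_all add: q2_tr) (metis star2_tr tr_tr)+
  then have "res_q1_zero TYPE('d::division_ring) (tr P) (tr Q)"
    using part1 qpoly2_tr assms h by blast
  then show "res_q2_zero TYPE('d::division_ring) P Q" by (simp add: res_tr)
qed

end
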